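(* Let $a_1,\ldots,a_k$ be positive integers, $A=\sum_{j=1}^k a_j$, $n=k+3$, and $v=[4A+2;\,8a_1,\ldots,8a_k,\,1,\,1,\,1]$ (players $1,\ldots,n$). Let $v_{\&\{n-1,n\}}$ be the game in which players $n-1$ and $n$ merge into one player $\&\{n-1,n\}$ of weight $2$. Then $\phi_{\&\{n-1,n\}}(v_{\&\{n-1,n\}})>\phi_{n-1}(v)+\phi_n(v)$ if and only if there is a set $P\subseteq\{1,\ldots,k\}$ with $\sum_{j\in P}a_j=\sum_{j\notin P}a_j$.
   Context: A weighted voting game $[q;w_1,\ldots,w_n]$ has players $1,\ldots,n$ with nonnegative weights and quota $q$, $0<q\le\sum_jw_j$; $v(S)=1$ iff $\sum_{j\in S}w_j\ge q$, else $0$. The Shapley–Shubik index of player $j$ in a game with player set $M$, $|M|=m$, is $\phi_j=\frac{1}{m!}\sum_{X\subseteq M,\,j\in X}(|X|-1)!\,(m-|X|)!\,(v(X)-v(X\setminus\{j\}))$. Merging a set $T$ of players yields the WVG with the same quota in which the players of $T$ are replaced by a single player $\&T$ of weight $\sum_{j\in T}w_j$. *)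

theory Defs
  imports Complex_Main
begin

definition wvg :: "real \<Rightarrow> ('a \<Rightarrow> real) \<Rightarrow> 'a set \<Rightarrow> real" where
  "wvg q w S = (if sum w S \<ge> q then 1 else 0)"

definition shapley :: "'a set \<Rightarrow> ('a set \<Rightarrow> real) \<Rightarrow> 'a \<Rightarrow> real" where
  "shapley M v j =
     (\<Sum>X\<in>{X. X \<subseteq> M \<and> j \<in> X}.
        fact (card X - 1) * fact (card M - card X) * (v X - v (X - {j}))) / fact (card M)"

text \<open>Merging a set T of players: the players of M - T are kept (as Some j),
  and T is replaced by the single new player None (= &T) of weight sum w T.\<close>
definition merge_players :: "'a set \<Rightarrow> 'a set \<Rightarrow> 'a option set" where
  "merge_players M T = Some ` (M - T) \<union> {None}"

definition merge_weight :: "('a \<Rightarrow> real) \<Rightarrow> 'a set \<Rightarrow> 'a option \<Rightarrow> real" where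
  "merge_weight w T x = (case x of None \<Rightarrow> sum w T | Some j \<Rightarrow> w j)"

end

theory Submission imports Defs begin
lemma sum_with_elem:
  assumes "finite M" "j \<in> M"
  shows "(\<Sum>X\<in>{X. X \<subseteq> M \<and> j \<in> X}. f X) = (\<Sum>Y\<in>Pow (M - {j}). f (insert j Y))"
proof -
  have inj: "inj_on (insert j) (Pow (M - {j}))"
  proof (rule inj_onI)
    fix x y assume "x \<in> Pow (M - {j})" "y \<in> Pow (M - {j})" "insert j x = insert j y"
    then have "j \<notin> x" "j \<notin> y" by auto
    then have "x = insert j x - {j}" "y = insert j y - {j}" by auto
    then show "x = y" using \<open>insert j x = insert j y\<close> by simp
  qed
  have img: "insert j ` Pow (M - {j}) = {X. X \<subseteq> M \<and> j \<in> X}"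
  proof
    show "insert j ` Pow (M - {j}) \<subseteq> {X. X \<subseteq> M \<and> j \<in> X}" using assms by auto
    show "{X. X \<subseteq> M \<and> j \<in> X} \<subseteq> insert j ` Pow (M - {j})"
    proof
      fix X assume "X \<in> {X. X \<subseteq> M \<and> j \<in> X}"
      then have "X = insert j (X - {j})" "X - {j} \<in> Pow (M - {j})" by auto
      then show "X \<in> insert j ` Pow (M - {j})" by blast
    qed
  qed
  show ?thesis using sum.reindex[OF inj, of f] img by simp
qed

lemma sum_Pow_insert:
  assumes "finite A" "a \<notin> A"
  shows "(\<Sum>T\<in>Pow (insert a A). g T) = (\<Sum>T\<in>Pow A. g T + g (insert a T))"
proof -
  have inj: "inj_on (insert a) (Pow A)"
  proof (rule inj_onI)
    fix x y assume "x \<in> Pow A" "y \<in> Pow A" "insert a x = insert a y"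
    then have "a \<notin> x" "a \<notin> y" using assms by auto
    then have "x = insert a x - {a}" "y = insert a y - {a}" by auto
    then show "x = y" using \<open>insert a x = insert a y\<close> by simp
  qed
  have "(\<Sum>T\<in>Pow (insert a A). g T) = (\<Sum>T\<in>Pow A. g T) + (\<Sum>T\<in>insert a ` Pow A. g T)"
    unfolding Pow_insert by (rule sum.union_disjoint) (use assms in auto)
  also have "(\<Sum>T\<in>insert a ` Pow A. g T) = (\<Sum>T\<in>Pow A. g (insert a T))"
    using sum.reindex[OF inj] by simp
  finally show ?thesis by (simp add: sum.distrib)
qed

lemma sum_Pow_image:
  assumes "inj_on f A"
  shows "(\<Sum>T\<in>Pow (f ` A). g T) = (\<Sum>T\<in>Pow A. g (f ` T))"
proof -
  have b: "bij_betw (image f) (Pow A) (Pow (f ` A))"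
    by (rule bij_betw_image_Pow[OF bij_betw_imageI[OF assms refl]])
  show ?thesis by (rule sum.reindex_bij_betw[OF b, symmetric])
qed

lemma key:
  fixes s t A :: nat
  assumes "t \<le> 3"
  shows "(4 * real A + 2 \<le> 8 * real s + real t) \<longleftrightarrow> (A < 2*s \<or> (2*s = A \<and> 2 \<le> t))"
proof -
  have "(4 * real A + 2 \<le> 8 * real s + real t) \<longleftrightarrow> real (4*A+2) \<le> real (8*s+t)"
    unfolding of_nat_add of_nat_mult of_nat_numeral by (rule refl)
  also have "\<dots> \<longleftrightarrow> 4*A+2 \<le> 8*s+t" by (rule of_nat_le_iff)
  also have "\<dots> \<longleftrightarrow> (A < 2*s \<or> (2*s = A \<and> 2 \<le> t))" using assms by presburger
  finally show ?thesis .
qed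

lemma ineq:
  fixes s d :: nat
  shows "4 * fact (s+1) * fact (d+1) / fact (s+d+3)
         < (fact s * fact (d+1) + fact (s+1) * fact d) / (fact (s+d+2) :: real)"
proof -
  define P :: real where "P = fact s * fact d"
  define F :: real where "F = fact (s+d+2)"
  have P: "P > 0" and F: "F > 0" unfolding P_def F_def by auto
  have e1: "fact (s+1) = (real s+1) * fact s" "fact (d+1) = (real d+1) * fact d"
    "fact (s+d+3) = (real s + real d + 3) * F"
  proof -
    show "fact (s+1) = (real s+1) * fact s" using fact_Suc[of s] by (simp add: add.commute)
    show "fact (d+1) = (real d+1) * fact d" using fact_Suc[of d] by (simp add: add.commute)
    have "s+d+3 = Suc (s+d+2)" by simp
    then have "fact (s+d+3) = real (Suc (s+d+2)) * (fact (s+d+2) :: real)" by (simp only: fact_Suc)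
    then show "fact (s+d+3) = (real s + real d + 3) * F" by (simp add: F_def)
  qed
  have nl: "4 * (real s+1) * (real d+1) < (real s + real d + 2) * (real s + real d + 3)"
  proof -
    have "0 \<le> (real s - real d)^2" by simp
    then show ?thesis by (simp add: power2_eq_square algebra_simps)
  qed
  have l: "4 * fact (s+1) * fact (d+1) / fact (s+d+3) = P * (4 * (real s+1) * (real d+1)) / ((real s + real d + 3) * F)"
    unfolding e1 P_def by (simp add: algebra_simps)
  have r: "(fact s * fact (d+1) + fact (s+1) * fact d) / (fact (s+d+2) :: real) = P * (real s + real d + 2) / F"
    unfolding e1 P_def F_def by (simp add: algebra_simps)
  have "P * (4 * (real s+1) * (real d+1)) / ((real s + real d + 3) * F) < P * (real s + real d + 2) / F"
  proof -
    have q: "4 * (real s+1) * (real d+1) / (real s + real d + 3) < real s + real d + 2"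
      using nl by (simp add: pos_divide_less_eq)
    have "P / F * (4 * (real s+1) * (real d+1) / (real s + real d + 3)) < P / F * (real s + real d + 2)"
      by (rule mult_strict_left_mono[OF q]) (use P F in simp)
    then show ?thesis by (simp add: field_simps)
  qed
  then show ?thesis using l r by simp
qed



lemma wv:
  fixes A s t :: nat
  assumes "sum w Z = 8 * real s + real t" "t \<le> 3"
  shows "wvg (4 * real A + 2) w Z = (if A < 2*s \<or> (2*s = A \<and> 2 \<le> t) then 1 else 0)"
  unfolding wvg_def assms(1) key[OF assms(2)] by simp

lemma orig_shapley:
  fixes k A :: nat and a :: "nat \<Rightarrow> nat" and b c p :: nat and w :: "nat \<Rightarrow> real"
  assumes M: "{1..k+3} - {p} = insert b (insert c {1..k})" and p: "k < p" "p \<le> k+3"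
    and bc: "k < b" "k < c" "b \<noteq> c" "b \<noteq> p" "c \<noteq> p"
    and w1: "w b = 1" "w c = 1" "w p = 1" and w8: "\<forall>j\<le>k. w j = 8 * real (a j)"
  shows "shapley {1..k+3} (wvg (4*real A+2) w) p
     = (\<Sum>Y\<in>Pow {1..k}. if 2 * sum a Y = A then 2 * fact (card Y + 1) * fact (k + 1 - card Y) else 0) / fact (k+3)"
proof -
  let ?v = "wvg (4*real A+2) w"
  define f where "f X = fact (card X - 1) * fact (card {1..k+3} - card X) * (?v X - ?v (X - {p}))" for X
  have "shapley {1..k+3} ?v p = (\<Sum>X\<in>{X. X \<subseteq> {1..k+3} \<and> p \<in> X}. f X) / fact (k+3)"
    unfolding shapley_def f_def by (simp add: add.commute)
  also have "(\<Sum>X\<in>{X. X \<subseteq> {1..k+3} \<and> p \<in> X}. f X) = (\<Sum>Y\<in>Pow (insert b (insert c {1..k})). f (insert p Y))"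
    using sum_with_elem[of "{1..k+3}" p f] p M by simp
  also have "\<dots> = (\<Sum>Y\<in>Pow {1..k}. (f (insert p Y) + f (insert p (insert b Y))) + (f (insert p (insert c Y)) + f (insert p (insert b (insert c Y)))))"
    using bc by (simp add: sum_Pow_insert)
  also have "\<dots> = (\<Sum>Y\<in>Pow {1..k}. if 2 * sum a Y = A then 2 * fact (card Y + 1) * fact (k + 1 - card Y) else 0)"
  proof (rule sum.cong[OF refl])
    fix Y assume "Y \<in> Pow {1..k}"
    then have Y: "Y \<subseteq> {1..k}" by simp
    have fin: "finite Y" using Y finite_subset by blast
    have ni: "b \<notin> Y" "c \<notin> Y" "p \<notin> Y" using Y bc p by auto
    have ne: "p \<noteq> b" "p \<noteq> c" "c \<noteq> b" using bc by auto
    have cY: "card Y \<le> k" using card_mono[OF _ Y] by simp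
    define s where "s = sum a Y"
    have sY: "sum w Y = 8 * real s"
    proof -
      have "sum w Y = (\<Sum>j\<in>Y. 8 * real (a j))" using Y w8 by (intro sum.cong) auto
      then show ?thesis by (simp add: s_def sum_distrib_left)
    qed
    define W where "W t = (if A < 2*s \<or> (2*s = A \<and> 2 \<le> t) then 1 else (0::real))" for t :: nat
    have v0: "?v Y = W 0" unfolding W_def by (rule wv) (simp_all add: sY)
    have v1: "?v (insert p Y) = W 1" "?v (insert b Y) = W 1" "?v (insert c Y) = W 1"
      unfolding W_def by (rule wv; simp add: sY fin ni w1)+
    have v2: "?v (insert p (insert b Y)) = W 2" "?v (insert p (insert c Y)) = W 2" "?v (insert b (insert c Y)) = W 2"
      unfolding W_def by (rule wv; simp add: sY fin ni w1 bc ne)+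
    have v3: "?v (insert p (insert b (insert c Y))) = W 3"
      unfolding W_def by (rule wv; simp add: sY fin ni w1 bc ne)
    have d1: "insert p Y - {p} = Y" "insert p (insert b Y) - {p} = insert b Y"
      "insert p (insert c Y) - {p} = insert c Y" "insert p (insert b (insert c Y)) - {p} = insert b (insert c Y)"
      using ni bc by auto
    have "f (insert p Y) = 0" unfolding f_def d1 v0 v1 W_def by simp
    moreover have "f (insert p (insert b (insert c Y))) = 0" unfolding f_def d1 v3 v2 W_def by simp
    moreover have "f (insert p (insert b Y)) = (if 2 * s = A then fact (card Y + 1) * fact (k + 1 - card Y) else 0)"
      unfolding f_def d1 v2 v1 W_def using fin ni bc ne cY by (simp add: numeral_3_eq_3)
    moreover have "f (insert p (insert c Y)) = (if 2 * s = A then fact (card Y + 1) * fact (k + 1 - card Y) else 0)"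
      unfolding f_def d1 v2 v1 W_def using fin ni bc ne cY by (simp add: numeral_3_eq_3)
    ultimately show "(f (insert p Y) + f (insert p (insert b Y))) + (f (insert p (insert c Y)) + f (insert p (insert b (insert c Y))))
       = (if 2 * sum a Y = A then 2 * fact (card Y + 1) * fact (k + 1 - card Y) else 0)"
      by (simp add: s_def)
  qed
  finally show ?thesis .
qed

lemma merged_shapley:
  fixes k A :: nat and a :: "nat \<Rightarrow> nat" and w :: "nat \<Rightarrow> real"
  assumes w1: "w (k+1) = 1" "w (k+2) = 1" "w (k+3) = 1" and w8: "\<forall>j\<le>k. w j = 8 * real (a j)"
  shows "shapley (merge_players {1..k+3} {k+2, k+3}) (wvg (4*real A+2) (merge_weight w {k+2, k+3})) None
     = (\<Sum>Y\<in>Pow {1..k}. if 2 * sum a Y = A then fact (card Y) * fact (k + 1 - card Y) + fact (card Y + 1) * fact (k - card Y) else 0) / fact (k+2)"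
proof -
  let ?M = "merge_players {1..k+3} {k+2, k+3}"
  let ?mw = "merge_weight w {k+2, k+3}"
  let ?v = "wvg (4*real A+2) ?mw"
  have M: "?M = insert None (insert (Some (k+1)) (Some ` {1..k}))"
  proof -
    have "{1..k+3} - {k+2, k+3} = insert (k+1) {1..k}" by auto
    then show ?thesis unfolding merge_players_def by auto
  qed
  have nk: "Some (k+1) \<notin> Some ` {1..k}" by auto
  have cM: "card ?M = k+2" unfolding M using nk by (simp add: card_image)
  have mwN: "?mw None = 2" using w1 by (simp add: merge_weight_def)
  have mwS: "\<And>j. ?mw (Some j) = w j" by (simp add: merge_weight_def)
  define f where "f X = fact (card X - 1) * fact (card ?M - card X) * (?v X - ?v (X - {None}))" for X
  have "shapley ?M ?v None = (\<Sum>X\<in>{X. X \<subseteq> ?M \<and> None \<in> X}. f X) / fact (k+2)"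
    unfolding shapley_def f_def cM by simp
  also have "(\<Sum>X\<in>{X. X \<subseteq> ?M \<and> None \<in> X}. f X) = (\<Sum>Y\<in>Pow (insert (Some (k+1)) (Some ` {1..k})). f (insert None Y))"
    using sum_with_elem[of ?M None f] unfolding M by simp
  also have "\<dots> = (\<Sum>Y\<in>Pow (Some ` {1..k}). f (insert None Y) + f (insert None (insert (Some (k+1)) Y)))"
    by (rule sum_Pow_insert) auto
  also have "\<dots> = (\<Sum>Y\<in>Pow {1..k}. f (insert None (Some ` Y)) + f (insert None (insert (Some (k+1)) (Some ` Y))))"
    by (rule sum_Pow_image) simp
  also have "\<dots> = (\<Sum>Y\<in>Pow {1..k}. if 2 * sum a Y = A then fact (card Y) * fact (k + 1 - card Y) + fact (card Y + 1) * fact (k - card Y) else 0)"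
  proof (rule sum.cong[OF refl])
    fix Y assume "Y \<in> Pow {1..k}"
    then have Y: "Y \<subseteq> {1..k}" by simp
    have fin: "finite Y" using Y finite_subset by blast
    have cY: "card Y \<le> k" using card_mono[OF _ Y] by simp
    let ?SY = "Some ` Y"
    have finS: "finite ?SY" using fin by simp
    have cS: "card ?SY = card Y" by (simp add: card_image)
    have ni: "None \<notin> ?SY" "Some (k+1) \<notin> ?SY" using Y by auto
    define s where "s = sum a Y"
    have sY: "sum ?mw ?SY = 8 * real s"
    proof -
      have "sum ?mw ?SY = sum w Y" by (simp add: sum.reindex merge_weight_def)
      also have "\<dots> = (\<Sum>j\<in>Y. 8 * real (a j))" using Y w8 by (intro sum.cong) auto
      finally show ?thesis by (simp add: s_def sum_distrib_left)
    qed
    define W where "W t = (if A < 2*s \<or> (2*s = A \<and> 2 \<le> t) then 1 else (0::real))" for t :: nat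
    have s1: "sum ?mw (insert (Some (k+1)) ?SY) = 8 * real s + real (1::nat)"
    proof -
      have "sum ?mw (insert (Some (k+1)) ?SY) = ?mw (Some (k+1)) + sum ?mw ?SY" by (rule sum.insert[OF finS ni(2)])
      then show ?thesis using mwS[of "k+1"] w1(1) sY by linarith
    qed
    have s2: "sum ?mw (insert None ?SY) = 8 * real s + real (2::nat)"
    proof -
      have "sum ?mw (insert None ?SY) = ?mw None + sum ?mw ?SY" by (rule sum.insert[OF finS ni(1)])
      then show ?thesis using mwN sY by linarith
    qed
    have s3: "sum ?mw (insert None (insert (Some (k+1)) ?SY)) = 8 * real s + real (3::nat)"
    proof -
      have "None \<notin> insert (Some (k+1)) ?SY" using ni by auto
      then have "sum ?mw (insert None (insert (Some (k+1)) ?SY)) = ?mw None + sum ?mw (insert (Some (k+1)) ?SY)"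
        using finS by (intro sum.insert) auto
      then show ?thesis using mwN s1 by linarith
    qed
    have s0: "sum ?mw ?SY = 8 * real s + real (0::nat)" using sY by simp
    define W where "W t = (if A < 2*s \<or> (2*s = A \<and> 2 \<le> t) then 1 else (0::real))" for t :: nat
    have v0: "?v ?SY = W 0" unfolding W_def by (rule wv[OF s0]) simp
    have v1: "?v (insert (Some (k+1)) ?SY) = W 1" unfolding W_def by (rule wv[OF s1]) simp
    have v2: "?v (insert None ?SY) = W 2" unfolding W_def by (rule wv[OF s2]) simp
    have v3: "?v (insert None (insert (Some (k+1)) ?SY)) = W 3" unfolding W_def by (rule wv[OF s3]) simp
    have d1: "insert None ?SY - {None} = ?SY" "insert None (insert (Some (k+1)) ?SY) - {None} = insert (Some (k+1)) ?SY"
      using ni by auto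
    have "f (insert None ?SY) = (if 2 * s = A then fact (card Y) * fact (k + 1 - card Y) else 0)"
      unfolding f_def d1 v2 v0 W_def cM using finS ni cS cY by auto
    moreover have "f (insert None (insert (Some (k+1)) ?SY)) = (if 2 * s = A then fact (card Y + 1) * fact (k - card Y) else 0)"
      unfolding f_def d1 v3 v1 W_def cM using finS ni cS cY by (auto simp: numeral_3_eq_3)
    ultimately show "f (insert None ?SY) + f (insert None (insert (Some (k+1)) ?SY))
       = (if 2 * sum a Y = A then fact (card Y) * fact (k + 1 - card Y) + fact (card Y + 1) * fact (k - card Y) else 0)"
      by (simp add: s_def)
  qed
  finally show ?thesis .
qed

theorem mainTheorem11:
  fixes k :: nat and a :: "nat \<Rightarrow> nat" and A :: nat and n :: nat and w :: "nat \<Rightarrow> real"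
    and q :: real
  assumes apos: "\<forall>j\<in>{1..k}. a j > 0"
  defines "A \<equiv> (\<Sum>j=1..k. a j)"
      and "n \<equiv> k + 3"
      and "w \<equiv> (\<lambda>j. if j \<le> k then 8 * real (a j) else 1)"
      and "q \<equiv> 4 * real A + 2"
  shows "shapley (merge_players {1..n} {n-1, n}) (wvg q (merge_weight w {n-1, n})) None
           > shapley {1..n} (wvg q w) (n-1) + shapley {1..n} (wvg q w) n
         \<longleftrightarrow> (\<exists>P\<subseteq>{1..k}. (\<Sum>j\<in>P. a j) = (\<Sum>j\<in>{1..k}-P. a j))"
proof -
  have nn: "n - 1 = k + 2" "n = k + 3" unfolding n_def by simp_all
  have w1: "w (k+1) = 1" "w (k+2) = 1" "w (k+3) = 1" unfolding w_def by simp_all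
  have w8: "\<forall>j\<le>k. w j = 8 * real (a j)" unfolding w_def by simp
  define G where "G Y \<longleftrightarrow> 2 * sum a Y = A" for Y
  define F where "F Y = (if G Y then (fact (card Y) * fact (k + 1 - card Y) + fact (card Y + 1) * fact (k - card Y)) / fact (k+2) else (0::real))" for Y
  define H where "H Y = (if G Y then 4 * fact (card Y + 1) * fact (k + 1 - card Y) / fact (k+3) else (0::real))" for Y
  have mer: "shapley (merge_players {1..n} {n-1, n}) (wvg q (merge_weight w {n-1, n})) None = (\<Sum>Y\<in>Pow {1..k}. F Y)"
    unfolding nn(1) unfolding nn(2) q_def merged_shapley[OF w1 w8] F_def G_def
    unfolding sum_divide_distrib by (intro sum.cong) auto
  have o1: "shapley {1..n} (wvg q w) (n-1) = (\<Sum>Y\<in>Pow {1..k}. if G Y then 2 * fact (card Y + 1) * fact (k + 1 - card Y) else 0) / fact (k+3)"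
    unfolding nn(1) unfolding nn(2) q_def G_def
  proof (rule orig_shapley[of k "k+2" "k+1" "k+3"])
    show "{1..k + 3} - {k + 2} = insert (k + 1) (insert (k + 3) {1..k})" by auto
  qed (use w1 w8 in simp_all)
  have o2: "shapley {1..n} (wvg q w) n = (\<Sum>Y\<in>Pow {1..k}. if G Y then 2 * fact (card Y + 1) * fact (k + 1 - card Y) else 0) / fact (k+3)"
    unfolding nn(1) unfolding nn(2) q_def G_def
  proof (rule orig_shapley[of k "k+3" "k+1" "k+2"])
    show "{1..k + 3} - {k + 3} = insert (k + 1) (insert (k + 2) {1..k})" by auto
  qed (use w1 w8 in simp_all)
  have ori: "shapley {1..n} (wvg q w) (n-1) + shapley {1..n} (wvg q w) n = (\<Sum>Y\<in>Pow {1..k}. H Y)"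
    unfolding o1 o2 H_def add_divide_distrib[symmetric] sum.distrib[symmetric] sum_divide_distrib by (intro sum.cong) auto
  have le: "H Y \<le> F Y" and lt: "G Y \<Longrightarrow> H Y < F Y" if "Y \<in> Pow {1..k}" for Y
  proof -
    have "card Y \<le> k" using that card_mono[of "{1..k}" Y] by simp
    then obtain d where d: "k = card Y + d" using le_Suc_ex by blast
    have i: "4 * fact (card Y + 1) * fact (k + 1 - card Y) / fact (k+3)
         < (fact (card Y) * fact (k + 1 - card Y) + fact (card Y + 1) * fact (k - card Y)) / (fact (k+2) :: real)"
      using ineq[of "card Y" d] unfolding d by (simp add: add.assoc)
    show "G Y \<Longrightarrow> H Y < F Y" unfolding H_def F_def using i by simp
    show "H Y \<le> F Y" unfolding H_def F_def using i by simp
  qed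
  have eqP: "(\<exists>P\<subseteq>{1..k}. (\<Sum>j\<in>P. a j) = (\<Sum>j\<in>{1..k}-P. a j)) \<longleftrightarrow> (\<exists>Y\<in>Pow {1..k}. G Y)"
  proof -
    have "\<And>P. P \<subseteq> {1..k} \<Longrightarrow> A = sum a ({1..k} - P) + sum a P"
      unfolding A_def by (rule sum.subset_diff) auto
    note sp = this
    show ?thesis
    proof
      assume "\<exists>P\<subseteq>{1..k}. (\<Sum>j\<in>P. a j) = (\<Sum>j\<in>{1..k}-P. a j)"
      then obtain P where P: "P \<subseteq> {1..k}" "sum a P = sum a ({1..k}-P)" by blast
      have "2 * sum a P = A" using sp[OF P(1)] P(2) by simp
      then show "\<exists>Y\<in>Pow {1..k}. G Y" using P(1) unfolding G_def by blast
    next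
      assume "\<exists>Y\<in>Pow {1..k}. G Y"
      then obtain P where P: "P \<subseteq> {1..k}" "2 * sum a P = A" unfolding G_def by blast
      have "sum a P = sum a ({1..k}-P)" using sp[OF P(1)] P(2) by simp
      then show "\<exists>P\<subseteq>{1..k}. (\<Sum>j\<in>P. a j) = (\<Sum>j\<in>{1..k}-P. a j)" using P(1) by blast
    qed
  qed
  show ?thesis unfolding mer ori eqP
  proof
    assume "(\<Sum>Y\<in>Pow {1..k}. H Y) < (\<Sum>Y\<in>Pow {1..k}. F Y)"
    then show "\<exists>Y\<in>Pow {1..k}. G Y"
    proof (rule contrapos_pp)
      assume "\<not> (\<exists>Y\<in>Pow {1..k}. G Y)"
      then have "\<forall>Y\<in>Pow {1..k}. H Y = 0 \<and> F Y = 0" unfolding H_def F_def by auto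
      then show "\<not> (\<Sum>Y\<in>Pow {1..k}. H Y) < (\<Sum>Y\<in>Pow {1..k}. F Y)" by simp
    qed
  next
    assume "\<exists>Y\<in>Pow {1..k}. G Y"
    then obtain Y where Y: "Y \<in> Pow {1..k}" "G Y" by blast
    show "(\<Sum>Y\<in>Pow {1..k}. H Y) < (\<Sum>Y\<in>Pow {1..k}. F Y)"
    proof (rule sum_strict_mono_ex1)
      show "\<forall>x\<in>Pow {1..k}. H x \<le> F x" using le by blast
      show "\<exists>x\<in>Pow {1..k}. H x < F x" using lt Y by blast
    qed simp
  qed
qed
end
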